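(* Let $\alpha>1$ be rational and $t$ a positive integer. For any instance $(I,B,v,C)$, let $\mathrm{OPT}$ be the optimal value of the Max-Buying-PL-Limited Problem and $\mathrm{OPT}'$ the optimal value of the Max-Buying-PL-Limited-$(\alpha,t)$ Problem on it. Then $\mathrm{OPT}'\ge \mathrm{OPT}/\alpha$.
   Context: Items are $I=\{1,\dots,n\}$, bidders form a finite set $B$, $v=(v_{ib})$ is a non-negative integer valuation matrix and $C_i$ are non-negative integer capacities. Max-Buying-PL-Limited Problem: choose a pricing $p\in\mathbb{Q}_{\ge0}^I$ with $p_1\ge\dots\ge p_n$ and an allocation $x:B\to I\cup\{\emptyset\}$ such that each item $i$ is allocated to at most $C_i$ bidders and $x_b=i$ implies $p_i\le v_{ib}$, maximizing $\sum_{b:x_b\ne\emptyset}p_{x_b}$. For $k\ge0$ let $d_k=\max\{v_{ib}\}/\alpha^k$. Max-Buying-PL-Limited-$(\alpha,t)$ Problem: choose prices $p_1\ge\dots\ge p_n$ with each $p_i\in\{d_0,d_1,\dots\}$ and a set of item–bidder pairs $(i,b)$ such that each item $i$ is given to at most $C_i$ bidders, $p_i\le v_{ib}$ whenever $b$ receives $i$, and for every integer $r\ge0$ each bidder receives at most one item with price in $\{d_{rt},\dots,d_{(r+1)t-1}\}$; the profit is the sum of $p_i$ over allocated pairs $(i,b)$. *)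

theory Defs
  imports Complex_Main
begin

definition vmax :: "nat \<Rightarrow> 'b set \<Rightarrow> (nat \<Rightarrow> 'b \<Rightarrow> nat) \<Rightarrow> nat" where
  "vmax n B v = Max (insert 0 {v i b | i b. i \<in> {1..n} \<and> b \<in> B})"

definition feasible_PL ::
  "nat \<Rightarrow> 'b set \<Rightarrow> (nat \<Rightarrow> 'b \<Rightarrow> nat) \<Rightarrow> (nat \<Rightarrow> nat) \<Rightarrow> (nat \<Rightarrow> rat) \<Rightarrow> ('b \<Rightarrow> nat option) \<Rightarrow> bool" where
  "feasible_PL n B v C p x \<longleftrightarrow>
     (\<forall>i\<in>{1..n}. p i \<ge> 0) \<and>
     (\<forall>i\<in>{1..n}. \<forall>j\<in>{1..n}. i \<le> j \<longrightarrow> p j \<le> p i) \<and>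
     (\<forall>b\<in>B. x b = None \<or> (\<exists>i\<in>{1..n}. x b = Some i)) \<and>
     (\<forall>i\<in>{1..n}. card {b\<in>B. x b = Some i} \<le> C i) \<and>
     (\<forall>b\<in>B. \<forall>i. x b = Some i \<longrightarrow> p i \<le> of_nat (v i b))"

definition profit_PL :: "'b set \<Rightarrow> (nat \<Rightarrow> rat) \<Rightarrow> ('b \<Rightarrow> nat option) \<Rightarrow> rat" where
  "profit_PL B p x = (\<Sum>b\<in>B. case x b of None \<Rightarrow> 0 | Some i \<Rightarrow> p i)"

definition OPT_PL :: "nat \<Rightarrow> 'b set \<Rightarrow> (nat \<Rightarrow> 'b \<Rightarrow> nat) \<Rightarrow> (nat \<Rightarrow> nat) \<Rightarrow> real" where
  "OPT_PL n B v C = Sup {real_of_rat (profit_PL B p x) | p x. feasible_PL n B v C p x}"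

definition dlev :: "nat \<Rightarrow> 'b set \<Rightarrow> (nat \<Rightarrow> 'b \<Rightarrow> nat) \<Rightarrow> rat \<Rightarrow> nat \<Rightarrow> rat" where
  "dlev n B v \<alpha> k = of_nat (vmax n B v) / \<alpha> ^ k"

definition feasible_PLat ::
  "rat \<Rightarrow> nat \<Rightarrow> nat \<Rightarrow> 'b set \<Rightarrow> (nat \<Rightarrow> 'b \<Rightarrow> nat) \<Rightarrow> (nat \<Rightarrow> nat) \<Rightarrow> (nat \<Rightarrow> rat) \<Rightarrow> (nat \<times> 'b) set \<Rightarrow> bool" where
  "feasible_PLat \<alpha> t n B v C p A \<longleftrightarrow>
     (\<forall>i\<in>{1..n}. p i \<in> range (dlev n B v \<alpha>)) \<and>
     (\<forall>i\<in>{1..n}. \<forall>j\<in>{1..n}. i \<le> j \<longrightarrow> p j \<le> p i) \<and>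
     A \<subseteq> {1..n} \<times> B \<and>
     (\<forall>i\<in>{1..n}. card {b. (i, b) \<in> A} \<le> C i) \<and>
     (\<forall>(i, b)\<in>A. p i \<le> of_nat (v i b)) \<and>
     (\<forall>r::nat. \<forall>b\<in>B.
        card {i. (i, b) \<in> A \<and> p i \<in> dlev n B v \<alpha> ` {r * t..<(r + 1) * t}} \<le> 1)"

definition profit_PLat :: "(nat \<Rightarrow> rat) \<Rightarrow> (nat \<times> 'b) set \<Rightarrow> rat" where
  "profit_PLat p A = (\<Sum>(i, b)\<in>A. p i)"

definition OPT_PLat :: "rat \<Rightarrow> nat \<Rightarrow> nat \<Rightarrow> 'b set \<Rightarrow> (nat \<Rightarrow> 'b \<Rightarrow> nat) \<Rightarrow> (nat \<Rightarrow> nat) \<Rightarrow> real" where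
  "OPT_PLat \<alpha> t n B v C =
     Sup {real_of_rat (profit_PLat p A) | p A. feasible_PLat \<alpha> t n B v C p A}"

end

theory Submission
  imports Defs
begin

lemma rat_arch_pow:
  fixes a y :: rat assumes "1 < a" shows "\<exists>n. y < a^n"
proof -
  obtain n where n: "y < of_nat n * (a - 1)" using ex_less_of_nat_mult[of "a-1" y] assms by auto
  have "1 + of_nat n * (a-1) \<le> (1 + (a-1))^n" by (rule Bernoulli_inequality) (use assms in auto)
  hence "1 + of_nat n * (a-1) \<le> a^n" by simp
  with n have "y < a ^ n" by linarith
  thus ?thesis by blast
qed

lemma vmax_ge:
  assumes "finite B" "i \<in> {1..n}" "b \<in> B"
  shows "v i b \<le> vmax n B v"
proof -
  have "{v i b |i b. i \<in> {1..n} \<and> b \<in> B} = (\<lambda>(i,b). v i b) ` ({1..n} \<times> B)" by (auto simp: image_iff) blast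
  hence fin: "finite (insert 0 {v i b |i b. i \<in> {1..n} \<and> b \<in> B})" using assms(1) by simp
  show ?thesis unfolding vmax_def by (rule Max_ge[OF fin]) (use assms in auto)
qed

lemma dlev_anti:
  assumes "\<alpha> > 1" "k \<le> k'"
  shows "dlev n B v \<alpha> k' \<le> dlev n B v \<alpha> k"
proof -
  have "\<alpha> ^ k \<le> \<alpha> ^ k'" using assms by (intro power_increasing) auto
  moreover have "0 < \<alpha> ^ k" using assms by simp
  ultimately show ?thesis unfolding dlev_def
    by (intro divide_left_mono) auto
qed

lemma dlev_Suc:
  assumes "\<alpha> > 1"
  shows "\<alpha> * dlev n B v \<alpha> (Suc j) = dlev n B v \<alpha> j"
  using assms unfolding dlev_def by (simp add: field_simps)

lemma main_step:
  fixes \<alpha> :: rat and t n :: nat and B :: "'b set"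
    and v :: "nat \<Rightarrow> 'b \<Rightarrow> nat" and C :: "nat \<Rightarrow> nat"
  assumes a1: "\<alpha> > 1" and "t > 0" and finB: "finite B"
    and feas: "feasible_PL n B v C p x"
  shows "\<exists>p' A. feasible_PLat \<alpha> t n B v C p' A \<and> profit_PL B p x \<le> \<alpha> * profit_PLat p' A"
proof -
  define d where "d = dlev n B v \<alpha>"
  define m where "m = Min (insert 1 {p i | i. i \<in> {1..n} \<and> p i > 0})"
  have finm: "finite (insert 1 {p i | i. i \<in> {1..n} \<and> p i > 0})" by simp
  have mpos: "m > 0" unfolding m_def using finm by (subst Min_gr_iff) auto
  have mle: "m \<le> p i" if "i \<in> {1..n}" "p i > 0" for i
    unfolding m_def by (rule Min_le[OF finm]) (use that in auto)
  obtain K where K: "of_nat (vmax n B v) / m < \<alpha> ^ K" using rat_arch_pow[OF a1] by blast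
  have dK: "d K \<le> m"
  proof -
    have "of_nat (vmax n B v) < m * \<alpha> ^ K" using K mpos by (simp add: field_simps)
    moreover have "\<alpha> ^ K > 0" using a1 by simp
    ultimately show ?thesis unfolding d_def dlev_def by (simp add: field_simps)
  qed
  define k where "k i = (LEAST k. d k \<le> p i \<or> K \<le> k)" for i
  define p' where "p' i = d (k i)" for i
  have k2: "d (k i) \<le> p i \<or> K \<le> k i" for i
    unfolding k_def by (rule LeastI[of _ K]) simp
  have danti: "k1 \<le> k2 \<Longrightarrow> d k2 \<le> d k1" for k1 k2 unfolding d_def using dlev_anti[OF a1] by blast
  have kmono: "k i \<le> k j" if "p j \<le> p i" for i j
  proof -
    have "d (k j) \<le> p i \<or> K \<le> k j" using k2[of j] that by auto
    thus ?thesis unfolding k_def[of i] by (rule Least_le)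
  qed
  have upper: "p' i \<le> p i" if "i \<in> {1..n}" "p i > 0" for i
  proof (cases "d (k i) \<le> p i")
    case True thus ?thesis by (simp add: p'_def)
  next
    case False
    hence "K \<le> k i" using k2[of i] by auto
    hence "d (k i) \<le> d K" by (rule danti)
    thus ?thesis using dK mle[OF that] by (simp add: p'_def)
  qed
  have lower: "p i \<le> \<alpha> * p' i" if "0 < p i" "p i \<le> of_nat (vmax n B v)" for i
  proof (cases "k i")
    case 0
    hence "p' i = of_nat (vmax n B v)" by (simp add: p'_def d_def dlev_def)
    moreover have "of_nat (vmax n B v) \<ge> (0::rat)" by simp
    ultimately show ?thesis using that a1
      by (metis dual_order.trans less_eq_rat_def mult_right_mono mult_1 )
  next
    case (Suc j)
    have "\<not> (d j \<le> p i \<or> K \<le> j)" using Suc unfolding k_def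
      by (metis lessI not_less_Least)
    hence "p i < d j" by auto
    also have "d j = \<alpha> * p' i" using dlev_Suc[OF a1, of n B v j] Suc by (simp add: p'_def d_def)
    finally show ?thesis by simp
  qed
  define A where "A = {(i,b). b \<in> B \<and> x b = Some i \<and> 0 < p i}"
  note F = feas[unfolded feasible_PL_def]
  have AB: "A \<subseteq> {1..n} \<times> B" unfolding A_def using F by auto
  have feas': "feasible_PLat \<alpha> t n B v C p' A"
    unfolding feasible_PLat_def
  proof (intro conjI ballI allI impI)
    fix i assume "i \<in> {1..n}" thus "p' i \<in> range (dlev n B v \<alpha>)" by (simp add: p'_def d_def)
  next
    fix i j assume "i \<in> {1..n}" "j \<in> {1..n}" "i \<le> j"
    hence "p j \<le> p i" using F by blast
    thus "p' j \<le> p' i" unfolding p'_def by (intro danti kmono)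
  next
    show "A \<subseteq> {1..n} \<times> B" by (rule AB)
  next
    fix i assume i: "i \<in> {1..n}"
    have "card {b. (i, b) \<in> A} \<le> card {b\<in>B. x b = Some i}"
      by (rule card_mono) (use finB in \<open>auto simp: A_def\<close>)
    also have "\<dots> \<le> C i" using F i by blast
    finally show "card {b. (i, b) \<in> A} \<le> C i" .
  next
    fix ib assume "ib \<in> A"
    then obtain i b where ib: "ib = (i,b)" "b \<in> B" "x b = Some i" "0 < p i" by (auto simp: A_def)
    hence i: "i \<in> {1..n}" using F by auto
    have "p' i \<le> p i" using upper[OF i ib(4)] .
    also have "p i \<le> of_nat (v i b)" using F ib by blast
    finally show "case ib of (i, b) \<Rightarrow> p' i \<le> of_nat (v i b)" using ib by simp
  next
    fix r :: nat and b assume "b \<in> B"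
    have "{i. (i, b) \<in> A \<and> p' i \<in> dlev n B v \<alpha> ` {r * t..<(r + 1) * t}} \<subseteq> set_option (x b)"
      by (auto simp: A_def)
    hence "card {i. (i, b) \<in> A \<and> p' i \<in> dlev n B v \<alpha> ` {r * t..<(r + 1) * t}} \<le> card (set_option (x b))"
      by (intro card_mono) auto
    also have "\<dots> \<le> 1" by (cases "x b") auto
    finally show "card {i. (i, b) \<in> A \<and> p' i \<in> dlev n B v \<alpha> ` {r * t..<(r + 1) * t}} \<le> 1" .
  qed
  define B' where "B' = {b\<in>B. \<exists>i. x b = Some i \<and> 0 < p i}"
  define g where "g b = the (x b)" for b
  have AB': "A = (\<lambda>b. (g b, b)) ` B'" unfolding A_def B'_def g_def by force
  have injg: "inj_on (\<lambda>b. (g b, b)) B'" by (auto intro: inj_onI)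
  have pA: "profit_PLat p' A = (\<Sum>b\<in>B'. p' (g b))"
    unfolding profit_PLat_def AB' by (simp add: sum.reindex[OF injg])
  have "profit_PL B p x \<le> (\<Sum>b\<in>B. if b \<in> B' then p (g b) else 0)"
    unfolding profit_PL_def
  proof (rule sum_mono)
    fix b assume b: "b \<in> B"
    show "(case x b of None \<Rightarrow> 0 | Some i \<Rightarrow> p i) \<le> (if b \<in> B' then p (g b) else 0)"
      using b by (cases "x b") (auto simp: B'_def g_def)
  qed
  also have "\<dots> = (\<Sum>b\<in>B'. p (g b))"
    by (subst sum.If_cases[OF finB]) (simp add: B'_def Int_def)
  also have "\<dots> \<le> (\<Sum>b\<in>B'. \<alpha> * p' (g b))"
  proof (rule sum_mono)
    fix b assume b: "b \<in> B'"
    then obtain i where i: "x b = Some i" "0 < p i" "b \<in> B" by (auto simp: B'_def)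
    hence iI: "i \<in> {1..n}" using F by auto
    have "p i \<le> of_nat (v i b)" using F i by blast
    also have "\<dots> \<le> of_nat (vmax n B v)" using vmax_ge[OF finB iI i(3)] by simp
    finally show "p (g b) \<le> \<alpha> * p' (g b)" using lower[OF i(2)] i by (simp add: g_def)
  qed
  also have "\<dots> = \<alpha> * profit_PLat p' A" by (simp add: pA sum_distrib_left)
  finally show ?thesis using feas' by blast
qed

lemma PLat_bound:
  assumes "finite B" "feasible_PLat \<alpha> t n B v C p A"
  shows "profit_PLat p A \<le> of_nat (card ({1..n} \<times> B)) * of_nat (vmax n B v)"
proof -
  note F = assms(2)[unfolded feasible_PLat_def]
  have AB: "A \<subseteq> {1..n} \<times> B" using F by blast
  have finA: "finite A" using AB assms(1) finite_subset by blast
  have "profit_PLat p A \<le> (\<Sum>ib\<in>A. of_nat (vmax n B v))"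
    unfolding profit_PLat_def
  proof (rule sum_mono)
    fix ib assume ib: "ib \<in> A"
    then obtain i b where e: "ib = (i,b)" by (cases ib)
    have "p i \<le> of_nat (v i b)" using F ib e by blast
    also have "\<dots> \<le> of_nat (vmax n B v)" using vmax_ge[OF assms(1), of i n b v] AB ib e by auto
    finally show "(case ib of (i, b) \<Rightarrow> p i) \<le> of_nat (vmax n B v)" using e by simp
  qed
  also have "\<dots> = of_nat (card A) * of_nat (vmax n B v)" by simp
  also have "\<dots> \<le> of_nat (card ({1..n} \<times> B)) * of_nat (vmax n B v)"
  proof (intro mult_right_mono)
    have "card A \<le> card ({1..n} \<times> B)" using card_mono[OF _ AB] assms(1) by simp
    thus "rat_of_nat (card A) \<le> rat_of_nat (card ({1..n} \<times> B))" by (simp only: of_nat_le_iff)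
  qed simp
  finally show ?thesis .
qed

theorem lemma15:
  fixes \<alpha> :: rat and t n :: nat and B :: "'b set"
    and v :: "nat \<Rightarrow> 'b \<Rightarrow> nat" and C :: "nat \<Rightarrow> nat"
  assumes "\<alpha> > 1" and "t > 0" and "finite B"
  shows "OPT_PLat \<alpha> t n B v C \<ge> OPT_PL n B v C / real_of_rat \<alpha>"
proof -
  define S where "S = {real_of_rat (profit_PL B p x) | p x. feasible_PL n B v C p x}"
  define T where "T = {real_of_rat (profit_PLat p A) | p A. feasible_PLat \<alpha> t n B v C p A}"
  have apos: "real_of_rat \<alpha> > 0" using assms(1) by simp
  have bdd: "bdd_above T"
  proof (rule bdd_aboveI)
    fix y assume "y \<in> T"
    then obtain p A where y: "y = real_of_rat (profit_PLat p A)" "feasible_PLat \<alpha> t n B v C p A"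
      unfolding T_def by blast
    show "y \<le> real_of_rat (of_nat (card ({1..n} \<times> B)) * of_nat (vmax n B v))"
      unfolding y(1) of_rat_less_eq using PLat_bound[OF assms(3) y(2)] .
  qed
  have Sne: "S \<noteq> {}"
  proof -
    have "feasible_PL n B v C (\<lambda>_. 0) (\<lambda>_. None)" unfolding feasible_PL_def by simp
    thus ?thesis unfolding S_def by blast
  qed
  have "Sup S \<le> real_of_rat \<alpha> * Sup T"
  proof (rule cSup_least[OF Sne])
    fix s assume "s \<in> S"
    then obtain p x where s: "s = real_of_rat (profit_PL B p x)" "feasible_PL n B v C p x"
      unfolding S_def by blast
    obtain p' A where pA: "feasible_PLat \<alpha> t n B v C p' A" "profit_PL B p x \<le> \<alpha> * profit_PLat p' A"
      using main_step[OF assms s(2)] by blast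
    have "s \<le> real_of_rat (\<alpha> * profit_PLat p' A)" unfolding s(1) of_rat_less_eq by (rule pA(2))
    also have "\<dots> = real_of_rat \<alpha> * real_of_rat (profit_PLat p' A)" by (simp add: of_rat_mult)
    also have "\<dots> \<le> real_of_rat \<alpha> * Sup T"
      using apos by (intro mult_left_mono cSup_upper[OF _ bdd]) (use pA(1) in \<open>auto simp: T_def\<close>)
    finally show "s \<le> real_of_rat \<alpha> * Sup T" .
  qed
  thus ?thesis unfolding OPT_PL_def OPT_PLat_def S_def[symmetric] T_def[symmetric]
    using apos by (simp add: divide_le_eq mult.commute)
qed

end
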